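(* Let $n \geq 3$. Assume that $\mu \colon \mathcal{R}^n \to \mathbb{R}^{n\times n}$ is a measurable valuation which is $\mathrm{GL}(n)$-covariant (i.e. $\mu(\phi P) = |\det\phi|\,\phi\,\mu(P)\,\phi^t$ whenever $\phi \in \mathrm{GL}(n)$ and $P, \phi P \in \mathcal{R}^n$) and which vanishes on $\mathcal{Q}^n$. Furthermore, assume that $\mu(P)$ is an antisymmetric matrix for all $P \in \mathcal{R}^n$. Then $\mu$ vanishes on $\mathcal{R}^n$.
   Context: Identify $\mathbb{R}^{n-1}$ with $e_n^\perp \subset \mathbb{R}^n$, and for $x \in \mathbb{R}^{n-1}$ write $(x,1)$ for the vector of $\mathbb{R}^n$ whose first $n-1$ coordinates are $x$ and last coordinate is $1$. Let $\mathcal{P}^{n-1}_o$ be the set of convex polytopes in $\mathbb{R}^{n-1}\cong e_n^\perp$ containing the origin in their (relative) interiors. For $B \in \mathcal{P}^{n-1}_o$, $c,d>0$ and $x,y \in \mathbb{R}^{n-1}$, say that $B,c,d,x,y$ form a double pyramid if $\mathrm{conv}(B \cup \{-c(x,1), d(y,1)\}) \cap e_n^\perp = B$. $\mathcal{R}^n$ is the set of all such polytopes $\mathrm{conv}(B\cup\{-c(x,1),d(y,1)\})$, and $\mathcal{Q}^n \subseteq \mathcal{R}^n$ is the subset with $x=y=0$. $\mathcal{R}^n$ carries the Hausdorff metric topology and "measurable" refers to Borel $\sigma$-algebras. A map $\mu$ on a family $\mathcal{S}$ of sets is a valuation if $\mu(K \cup L) + \mu(K \cap L) = \mu(K) + \mu(L)$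 whenever $K, L, K\cup L, K \cap L \in \mathcal{S}$. *)

theory Defs
  imports "HOL-Analysis.Analysis"
begin

text \<open>The distinguished last coordinate e_n is represented by an index k of the finite
  index type 'n; R^{n-1} is identified with the hyperplane e_k^perp.\<close>

definition hplane :: "'n::finite \<Rightarrow> (real^'n) set" where
  "hplane k = {v. v $ k = 0}"

text \<open>(x,1): the vector with first n-1 coordinates x and last coordinate 1.\<close>
definition lift1 :: "'n::finite \<Rightarrow> real^'n \<Rightarrow> real^'n" where
  "lift1 k x = x + axis k 1"

definition Po :: "'n::finite \<Rightarrow> (real^'n) set set" where
  "Po k = {B. polytope B \<and> B \<subseteq> hplane k \<and> aff_dim B = int CARD('n) - 1
              \<and> 0 \<in> rel_interior B}"

definition double_pyramid ::
  "'n::finite \<Rightarrow> (real^'n) set \<Rightarrow> real \<Rightarrow> real \<Rightarrow> real^'n \<Rightarrow> real^'n \<Rightarrow> bool" where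
  "double_pyramid k B c d x y \<longleftrightarrow>
     B \<in> Po k \<and> c > 0 \<and> d > 0 \<and> x \<in> hplane k \<and> y \<in> hplane k \<and>
     convex hull (B \<union> {- (c *\<^sub>R lift1 k x), d *\<^sub>R lift1 k y}) \<inter> hplane k = B"

definition Rn :: "'n::finite \<Rightarrow> (real^'n) set set" where
  "Rn k = {convex hull (B \<union> {- (c *\<^sub>R lift1 k x), d *\<^sub>R lift1 k y}) | B c d x y.
             double_pyramid k B c d x y}"

definition Qn :: "'n::finite \<Rightarrow> (real^'n) set set" where
  "Qn k = {convex hull (B \<union> {- (c *\<^sub>R lift1 k 0), d *\<^sub>R lift1 k 0}) | B c d.
             double_pyramid k B c d 0 0}"

definition hausdorff_dist :: "'a::metric_space set \<Rightarrow> 'a set \<Rightarrow> real" where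
  "hausdorff_dist S T = max (SUP x\<in>S. setdist {x} T) (SUP y\<in>T. setdist {y} S)"

definition hausdorff_borel :: "'a::metric_space set set \<Rightarrow> 'a set measure" where
  "hausdorff_borel F = sigma F {U. openin (Metric_space.mtopology F hausdorff_dist) U}"

definition valuation_on :: "'a set set \<Rightarrow> ('a set \<Rightarrow> 'b::ab_group_add) \<Rightarrow> bool" where
  "valuation_on S \<mu> \<longleftrightarrow> (\<forall>K L. K \<in> S \<longrightarrow> L \<in> S \<longrightarrow> K \<union> L \<in> S \<longrightarrow> K \<inter> L \<in> S \<longrightarrow>
       \<mu> (K \<union> L) + \<mu> (K \<inter> L) = \<mu> K + \<mu> L)"

definition GL_covariant_on ::
  "(real^'n::finite) set set \<Rightarrow> ((real^'n) set \<Rightarrow> real^'n^'n) \<Rightarrow> bool" where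
  "GL_covariant_on S \<mu> \<longleftrightarrow> (\<forall>\<phi>::real^'n^'n. \<forall>P. invertible \<phi> \<longrightarrow> P \<in> S \<longrightarrow>
       (\<lambda>v. \<phi> *v v) ` P \<in> S \<longrightarrow>
       \<mu> ((\<lambda>v. \<phi> *v v) ` P) = \<bar>det \<phi>\<bar> *\<^sub>R (\<phi> ** \<mu> P ** transpose \<phi>))"

end

theory Submission
  imports Defs
begin


definition PP :: "'n::finite \<Rightarrow> (real^'n) set \<Rightarrow> real \<Rightarrow> real \<Rightarrow> real^'n \<Rightarrow> real^'n \<Rightarrow> (real^'n) set" where
  "PP k B c d x y = convex hull (B \<union> {- (c *\<^sub>R lift1 k x), d *\<^sub>R lift1 k y})"

definition lo :: "'n::finite \<Rightarrow> (real^'n) set \<Rightarrow> real \<Rightarrow> real^'n \<Rightarrow> (real^'n) set" where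
  "lo k B c x = convex hull (insert (- (c *\<^sub>R lift1 k x)) B)"

definition up :: "'n::finite \<Rightarrow> (real^'n) set \<Rightarrow> real \<Rightarrow> real^'n \<Rightarrow> (real^'n) set" where
  "up k B d y = convex hull (insert (d *\<^sub>R lift1 k y) B)"

lemma lift_k[simp]: "x \<in> hplane k \<Longrightarrow> lift1 k x $ k = 1"
  by (simp add: lift1_def hplane_def)

lemma hplane_eq: "hplane k = {x. axis k 1 \<bullet> x = 0}"
  by (auto simp: hplane_def cart_eq_inner_axis inner_commute)

lemma Po_props:
  assumes "B \<in> Po k"
  shows "convex B" "0 \<in> B" "B \<noteq> {}" "B \<subseteq> hplane k" "polytope B"
  using assms by (auto simp: Po_def polytope_imp_convex dest: rel_interior_subset[THEN subsetD])

lemma Po_affhull: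
  fixes k :: "'n::finite"
  assumes "B \<in> Po k"
  shows "affine hull B = hplane k"
proof -
  have "affine (hplane k)" unfolding hplane_eq by (rule affine_hyperplane)
  have sub: "affine hull B \<subseteq> hplane k"
    using Po_props(4)[OF assms] \<open>affine (hplane k)\<close> by (simp add: hull_minimal)
  have "aff_dim (hplane k) = int CARD('n) - 1"
    unfolding hplane_eq by (subst aff_dim_hyperplane) auto
  moreover have "aff_dim (affine hull B) = int CARD('n) - 1"
    using assms by (simp add: Po_def)
  ultimately show ?thesis
    using affine_dim_equal[of "affine hull B" "hplane k"] sub \<open>affine (hplane k)\<close> Po_props(3)[OF assms]
    by auto
qed

lemma Po_small:
  assumes "B \<in> Po k" "v \<in> hplane k"
  shows "\<exists>r>0. r *\<^sub>R v \<in> B"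
proof -
  have "0 \<in> rel_interior B" using assms by (simp add: Po_def)
  then obtain e where e: "e > 0" "ball 0 e \<inter> affine hull B \<subseteq> B"
    by (auto simp: mem_rel_interior_ball)
  define r where "r = e / (2 * (norm v + 1))"
  have den: "0 < 2 * (norm v + 1)"
    by (metis add_pos_nonneg norm_ge_zero zero_less_one mult_pos_pos zero_less_numeral add.commute)
  have r: "r > 0" using e den unfolding r_def by (intro divide_pos_pos)
  have "norm (r *\<^sub>R v) = r * norm v" using r by simp
  also have "\<dots> < e"
  proof -
    have aux: "\<And>t::real. 0 \<le> t \<Longrightarrow> t < 2 * (t + 1)" by (simp add: algebra_simps)
    have lt: "e * norm v < e * (2 * (norm v + 1))" using e aux[OF norm_ge_zero[of v]] by (intro mult_strict_left_mono)
    have eq: "r * norm v = (e * norm v) / (2 * (norm v + 1))" by (simp add: r_def)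
    have "(e * norm v) / (2 * (norm v + 1)) < e" by (subst pos_divide_less_eq[OF den]) (rule lt)
    with eq show ?thesis by simp
  qed
  finally have "r *\<^sub>R v \<in> ball 0 e" by simp
  moreover have "r *\<^sub>R v \<in> hplane k" using assms(2) by (simp add: hplane_def)
  ultimately show ?thesis using e r Po_affhull[OF assms(1)] by blast
qed

lemma convex3:
  assumes "convex C" "x \<in> C" "y \<in> C" "z \<in> C" "0 \<le> \<alpha>" "0 \<le> \<beta>" "0 \<le> \<gamma>" "\<alpha> + \<beta> + \<gamma> = 1"
  shows "\<alpha> *\<^sub>R x + \<beta> *\<^sub>R y + \<gamma> *\<^sub>R z \<in> C"
proof -
  have "convex hull {x,y,z} \<subseteq> C" using assms by (simp add: hull_minimal)
  moreover have "\<alpha> *\<^sub>R x + \<beta> *\<^sub>R y + \<gamma> *\<^sub>R z \<in> convex hull {x,y,z}"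
    unfolding convex_hull_3 using assms by blast
  ultimately show ?thesis by blast
qed

lemma hull_insert_mem:
  assumes "w \<in> B" "0 \<le> s" "s \<le> 1"
  shows "s *\<^sub>R a + (1 - s) *\<^sub>R w \<in> convex hull (insert a B)"
  using assms by (intro convexD[OF convex_convex_hull]) (auto intro: hull_inc)

lemma hull_insert_elim:
  fixes B :: "'a::real_vector set"
  assumes "convex B" "B \<noteq> {}" "z \<in> convex hull (insert a B)"
  obtains s w where "0 \<le> s" "s \<le> 1" "w \<in> B" "z = s *\<^sub>R a + (1 - s) *\<^sub>R w"
proof -
  obtain u v b where uv: "u \<ge> 0" "v \<ge> 0" "u + v = 1" "b \<in> convex hull B" "z = u *\<^sub>R a + v *\<^sub>R b"
    using assms(3) unfolding convex_hull_insert[OF assms(2)] by blast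
  have "b \<in> B" using uv(4) assms(1) by (metis convex_hull_eq)
  moreover have "v = 1 - u" using uv by simp
  ultimately show ?thesis using that[of u b] uv by auto
qed

lemma split_hull:
  fixes a b :: "'a::real_vector"
  assumes cB: "convex B" and ne: "B \<noteq> {}" and t: "0 < t" "t < 1"
    and pB: "(1 - t) *\<^sub>R a + t *\<^sub>R b \<in> B"
  shows "convex hull (B \<union> {a, b}) = convex hull (insert a B) \<union> convex hull (insert b B)"
proof
  have s1: "insert a B \<subseteq> B \<union> {a,b}" and s2: "insert b B \<subseteq> B \<union> {a,b}" by auto
  show "convex hull (insert a B) \<union> convex hull (insert b B) \<subseteq> convex hull (B \<union> {a, b})"
    using hull_mono[OF s1, of convex] hull_mono[OF s2, of convex] by (rule Un_least)
next
  define p where "p = (1 - t) *\<^sub>R a + t *\<^sub>R b"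
  have pB': "p \<in> B" using pB by (simp add: p_def)
  show "convex hull (B \<union> {a, b}) \<subseteq> convex hull (insert a B) \<union> convex hull (insert b B)"
  proof
    fix q assume q: "q \<in> convex hull (B \<union> {a, b})"
    have eq: "B \<union> {a, b} = insert a (insert b B)" by auto
    obtain u v w' where uv: "u \<ge> 0" "v \<ge> 0" "u + v = 1" "w' \<in> convex hull (insert b B)"
        "q = u *\<^sub>R a + v *\<^sub>R w'"
      using q unfolding eq convex_hull_insert[of "insert b B" a, OF insert_not_empty] by blast
    obtain u' v' w where uv': "u' \<ge> 0" "v' \<ge> 0" "u' + v' = 1" "w \<in> convex hull B"
        "w' = u' *\<^sub>R b + v' *\<^sub>R w"
      using uv(4) unfolding convex_hull_insert[OF ne] by blast
    have wB: "w \<in> B" using uv'(4) cB by (metis convex_hull_eq)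
    define \<alpha> where "\<alpha> = u"
    define \<beta> where "\<beta> = v * u'"
    define \<gamma> where "\<gamma> = v * v'"
    have q': "q = \<alpha> *\<^sub>R a + \<beta> *\<^sub>R b + \<gamma> *\<^sub>R w"
      using uv(5) uv'(5) by (simp add: \<alpha>_def \<beta>_def \<gamma>_def scaleR_add_right add.assoc)
    have pos: "\<alpha> \<ge> 0" "\<beta> \<ge> 0" "\<gamma> \<ge> 0" using uv uv' by (auto simp: \<alpha>_def \<beta>_def \<gamma>_def)
    have vv: "v * u' + v * v' = v" using uv'(3) by (metis distrib_left mult_1_right)
    have sum1: "\<alpha> + \<beta> + \<gamma> = 1" using vv uv(3) unfolding \<alpha>_def \<beta>_def \<gamma>_def by linarith
    have inA: "a \<in> insert a B" "p \<in> insert a B" "w \<in> insert a B" using pB' wB by auto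
    have inB: "p \<in> insert b B" "b \<in> insert b B" "w \<in> insert b B" using pB' wB by auto
    show "q \<in> convex hull (insert a B) \<union> convex hull (insert b B)"
    proof (cases "\<beta> * (1 - t) \<le> \<alpha> * t")
      case True
      define X where "X = \<beta> * (1 - t) / t"
      have X: "X \<le> \<alpha>" using True t by (simp add: X_def pos_divide_le_eq)
      have e1: "(\<beta> / t) *\<^sub>R p = X *\<^sub>R a + \<beta> *\<^sub>R b"
        using t unfolding p_def X_def by (simp add: scaleR_add_right)
      have "(\<alpha> - X) *\<^sub>R a + (\<beta> / t) *\<^sub>R p + \<gamma> *\<^sub>R w = ((\<alpha> - X) *\<^sub>R a + X *\<^sub>R a) + \<beta> *\<^sub>R b + \<gamma> *\<^sub>R w"
        unfolding e1 by (simp add: add.assoc)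
      also have "(\<alpha> - X) *\<^sub>R a + X *\<^sub>R a = \<alpha> *\<^sub>R a" by (simp add: scaleR_diff_left)
      finally have qq: "q = (\<alpha> - X) *\<^sub>R a + (\<beta> / t) *\<^sub>R p + \<gamma> *\<^sub>R w" using q' by simp
      have bx: "\<beta> / t - X = \<beta>" using t unfolding X_def by (simp add: diff_divide_distrib[symmetric] right_diff_distrib)
      have s1: "(\<alpha> - X) + \<beta> / t + \<gamma> = 1" using sum1 bx by linarith
      have c1: "0 \<le> \<alpha> - X" using X by linarith
      have c2: "0 \<le> \<beta> / t" using pos t by simp
      have "q \<in> convex hull (insert a B)"
        unfolding qq
        by (rule convex3[OF convex_convex_hull hull_inc[OF inA(1)] hull_inc[OF inA(2)] hull_inc[OF inA(3)] c1 c2 pos(3) s1])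
      then show ?thesis by blast
    next
      case False
      define Y where "Y = \<alpha> * t / (1 - t)"
      have t1: "0 < 1 - t" using t by linarith
      have Y: "Y \<le> \<beta>" using False t1 by (simp add: Y_def pos_divide_le_eq)
      have e1: "(\<alpha> / (1 - t)) *\<^sub>R p = \<alpha> *\<^sub>R a + Y *\<^sub>R b"
        using t1 unfolding p_def Y_def by (simp add: scaleR_add_right)
      have "(\<alpha> / (1 - t)) *\<^sub>R p + (\<beta> - Y) *\<^sub>R b + \<gamma> *\<^sub>R w = \<alpha> *\<^sub>R a + (Y *\<^sub>R b + (\<beta> - Y) *\<^sub>R b) + \<gamma> *\<^sub>R w"
        unfolding e1 by (simp add: add.assoc)
      also have "Y *\<^sub>R b + (\<beta> - Y) *\<^sub>R b = \<beta> *\<^sub>R b" by (simp add: scaleR_diff_left)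
      finally have qq: "q = (\<alpha> / (1 - t)) *\<^sub>R p + (\<beta> - Y) *\<^sub>R b + \<gamma> *\<^sub>R w" using q' by (simp add: add.assoc)
      have ay: "\<alpha> / (1 - t) - Y = \<alpha>"
      proof -
        have h: "\<alpha> - \<alpha> * t = \<alpha> * (1 - t)" by (simp add: algebra_simps)
        have "\<alpha> / (1 - t) - Y = (\<alpha> - \<alpha> * t) / (1 - t)" unfolding Y_def by (simp add: diff_divide_distrib)
        also have "\<dots> = \<alpha>" unfolding h using t1 by simp
        finally show ?thesis .
      qed
      have s1: "\<alpha> / (1 - t) + (\<beta> - Y) + \<gamma> = 1" using sum1 ay by linarith
      have c1: "0 \<le> \<beta> - Y" using Y by linarith
      have c2: "0 \<le> \<alpha> / (1 - t)" using pos t1 by simp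
      have "q \<in> convex hull (insert b B)"
        unfolding qq
        by (rule convex3[OF convex_convex_hull hull_inc[OF inB(1)] hull_inc[OF inB(2)] hull_inc[OF inB(3)] c2 c1 pos(3) s1])
      then show ?thesis by blast
    qed
  qed
qed



lemma seg_point:
  assumes "c > 0" "d > 0"
  shows "(1 - c/(c+d)) *\<^sub>R (- (c *\<^sub>R lift1 k x)) + (c/(c+d)) *\<^sub>R (d *\<^sub>R lift1 k y)
         = (c*d/(c+d)) *\<^sub>R (y - x)"
proof -
  have h: "1 - c/(c+d) = d/(c+d)" using assms by (simp add: field_simps)
  have "(1 - c/(c+d)) *\<^sub>R (- (c *\<^sub>R lift1 k x)) + (c/(c+d)) *\<^sub>R (d *\<^sub>R lift1 k y)
        = (c*d/(c+d)) *\<^sub>R (lift1 k y - lift1 k x)"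
    unfolding h by (simp add: scaleR_diff_right algebra_simps)
  also have "lift1 k y - lift1 k x = y - x" by (simp add: lift1_def)
  finally show ?thesis .
qed

lemma lo_k:
  assumes "B \<in> Po k" "c > 0" "x \<in> hplane k" "z \<in> lo k B c x"
  shows "z $ k \<le> 0 \<and> (z $ k = 0 \<longrightarrow> z \<in> B)"
proof -
  obtain s w where sw: "0 \<le> s" "s \<le> 1" "w \<in> B" "z = s *\<^sub>R (- (c *\<^sub>R lift1 k x)) + (1 - s) *\<^sub>R w"
    using hull_insert_elim[OF Po_props(1,3)[OF assms(1)] assms(4)[unfolded lo_def]] by blast
  have wk: "w $ k = 0" using sw(3) Po_props(4)[OF assms(1)] by (auto simp: hplane_def)
  have zk: "z $ k = - (s * c)" using sw(4) wk assms(3) by simp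
  have "z $ k \<le> 0" using zk sw(1) assms(2) by simp
  moreover have "z $ k = 0 \<longrightarrow> z \<in> B"
  proof
    assume "z $ k = 0"
    then have "s = 0" using zk assms(2) by simp
    then show "z \<in> B" using sw by simp
  qed
  ultimately show ?thesis by blast
qed

lemma up_k:
  assumes "B \<in> Po k" "d > 0" "y \<in> hplane k" "z \<in> up k B d y"
  shows "z $ k \<ge> 0 \<and> (z $ k = 0 \<longrightarrow> z \<in> B)"
proof -
  obtain s w where sw: "0 \<le> s" "s \<le> 1" "w \<in> B" "z = s *\<^sub>R (d *\<^sub>R lift1 k y) + (1 - s) *\<^sub>R w"
    using hull_insert_elim[OF Po_props(1,3)[OF assms(1)] assms(4)[unfolded up_def]] by blast
  have wk: "w $ k = 0" using sw(3) Po_props(4)[OF assms(1)] by (auto simp: hplane_def)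
  have zk: "z $ k = s * d" using sw(4) wk assms(3) by simp
  have "z $ k \<ge> 0" using zk sw(1) assms(2) by simp
  moreover have "z $ k = 0 \<longrightarrow> z \<in> B"
  proof
    assume "z $ k = 0"
    then have "s = 0" using zk assms(2) by simp
    then show "z \<in> B" using sw by simp
  qed
  ultimately show ?thesis by blast
qed

lemma PP_split_gen:
  assumes "B \<in> Po k" "c > 0" "d > 0" "(c*d/(c+d)) *\<^sub>R (y - x) \<in> B"
  shows "PP k B c d x y = lo k B c x \<union> up k B d y"
proof -
  have t: "0 < c/(c+d)" "c/(c+d) < 1" using assms by (auto simp: field_simps)
  show ?thesis unfolding PP_def lo_def up_def
    by (rule split_hull[OF Po_props(1,3)[OF assms(1)] t]) (unfold seg_point[OF assms(2,3)], rule assms(4))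
qed

lemma dp_valid:
  assumes B: "B \<in> Po k" and cd: "c > 0" "d > 0" and xy: "x \<in> hplane k" "y \<in> hplane k"
    and p: "(c*d/(c+d)) *\<^sub>R (y - x) \<in> B"
  shows "double_pyramid k B c d x y"
proof -
  have sp: "PP k B c d x y = lo k B c x \<union> up k B d y" using PP_split_gen[OF B cd p] .
  have "PP k B c d x y \<inter> hplane k = B"
  proof
    show "PP k B c d x y \<inter> hplane k \<subseteq> B"
    proof
      fix z assume z: "z \<in> PP k B c d x y \<inter> hplane k"
      then have zk: "z $ k = 0" by (simp add: hplane_def)
      show "z \<in> B"
        using z sp lo_k[OF B cd(1) xy(1)] up_k[OF B cd(2) xy(2)] zk by auto
    qed
    show "B \<subseteq> PP k B c d x y \<inter> hplane k"
      using sp Po_props(4)[OF B] by (auto simp: lo_def intro: hull_inc)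
  qed
  then show ?thesis using assms unfolding double_pyramid_def PP_def by auto
qed

lemma dp_facts:
  assumes "double_pyramid k B c d x y"
  shows "B \<in> Po k" "c > 0" "d > 0" "x \<in> hplane k" "y \<in> hplane k"
    "PP k B c d x y \<inter> hplane k = B"
  using assms by (auto simp: double_pyramid_def PP_def)

lemma dp_point:
  assumes dp: "double_pyramid k B c d x y"
  shows "(c*d/(c+d)) *\<^sub>R (y - x) \<in> B"
proof -
  note f = dp_facts[OF dp]
  have t: "0 \<le> c/(c+d)" "c/(c+d) \<le> 1" using f by (auto simp: field_simps)
  have mem: "(1 - c/(c+d)) *\<^sub>R (- (c *\<^sub>R lift1 k x)) + (c/(c+d)) *\<^sub>R (d *\<^sub>R lift1 k y) \<in> PP k B c d x y"
    unfolding PP_def using t by (intro convexD[OF convex_convex_hull]) (auto intro: hull_inc)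
  have eq: "(1 - c/(c+d)) *\<^sub>R (- (c *\<^sub>R lift1 k x)) + (c/(c+d)) *\<^sub>R (d *\<^sub>R lift1 k y) = (c*d/(c+d)) *\<^sub>R (y - x)"
    by (rule seg_point[OF f(2,3)])
  have "(c*d/(c+d)) *\<^sub>R (y - x) \<in> PP k B c d x y" using mem unfolding eq .
  moreover have "(c*d/(c+d)) *\<^sub>R (y - x) \<in> hplane k" using f(4,5) by (simp add: hplane_def)
  ultimately show ?thesis using f(6) by blast
qed

lemma dp_split:
  assumes dp: "double_pyramid k B c d x y"
  shows "PP k B c d x y = lo k B c x \<union> up k B d y"
  using PP_split_gen[OF dp_facts(1,2,3)[OF dp] dp_point[OF dp]] .

lemma dp_Rn: "double_pyramid k B c d x y \<Longrightarrow> PP k B c d x y \<in> Rn k"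
  unfolding Rn_def PP_def by blast

lemma dp_Qn: "double_pyramid k B c d 0 0 \<Longrightarrow> PP k B c d 0 0 \<in> Qn k"
  unfolding Qn_def PP_def by blast

definition shear :: "'n::finite \<Rightarrow> real^'n \<Rightarrow> real^'n^'n" where
  "shear k z = (\<chi> i j. (if i = j then 1 else 0) + (if j = k then z $ i else 0))"

lemma shear_mv: "shear k z *v v = v + (v $ k) *\<^sub>R z"
proof -
  have "(shear k z *v v) $ i = v $ i + v $ k * z $ i" for i
  proof -
    have "(shear k z *v v) $ i = (\<Sum>j\<in>UNIV. (if j = i then v $ i else 0) + (if j = k then z $ i * v $ k else 0))"
      unfolding shear_def matrix_vector_mult_def by (auto simp: distrib_right intro!: sum.cong)
    also have "\<dots> = v $ i + v $ k * z $ i" by (simp add: sum.distrib)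
    finally show ?thesis .
  qed
  then show ?thesis by (simp add: vec_eq_iff)
qed

lemma shear_mult_left: "(shear k z ** Y) $ i $ j = Y $ i $ j + z $ i * Y $ k $ j"
proof -
  have "(shear k z ** Y) $ i $ j = (\<Sum>l\<in>UNIV. (if l = i then Y $ i $ j else 0) + (if l = k then z $ i * Y $ k $ j else 0))"
    unfolding shear_def matrix_matrix_mult_def by (auto simp: distrib_right intro!: sum.cong)
  also have "\<dots> = Y $ i $ j + z $ i * Y $ k $ j" by (simp add: sum.distrib)
  finally show ?thesis .
qed

lemma shear_mult_right: "(Y ** transpose (shear k z)) $ i $ j = Y $ i $ j + Y $ i $ k * z $ j"
proof -
  have "(Y ** transpose (shear k z)) $ i $ j = (\<Sum>l\<in>UNIV. (if l = j then Y $ i $ j else 0) + (if l = k then Y $ i $ k * z $ j else 0))"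
    unfolding shear_def matrix_matrix_mult_def transpose_def by (auto simp: distrib_left intro!: sum.cong)
  also have "\<dots> = Y $ i $ j + Y $ i $ k * z $ j" by (simp add: sum.distrib)
  finally show ?thesis .
qed

lemma shear_inv:
  assumes "z $ k \<noteq> -1"
  shows "invertible (shear k z)"
proof -
  define w where "w = (- inverse (1 + z $ k)) *\<^sub>R z"
  have nz: "1 + z $ k \<noteq> 0" using assms by linarith
  have wk: "1 + w $ k = inverse (1 + z $ k)"
    using nz by (simp add: w_def field_simps)
  have "shear k z ** shear k w = mat 1"
  proof (subst matrix_eq, intro allI)
    fix v :: "real^'a"
    have "(shear k z ** shear k w) *v v = shear k z *v (shear k w *v v)"
      by (simp add: matrix_vector_mul_assoc)
    also have "\<dots> = v + (v $ k) *\<^sub>R (w + (1 + w $ k) *\<^sub>R z)"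
      by (simp add: shear_mv algebra_simps)
    also have "w + (1 + w $ k) *\<^sub>R z = 0" unfolding wk by (simp add: w_def)
    finally show "(shear k z ** shear k w) *v v = mat 1 *v v" by simp
  qed
  moreover have "shear k w ** shear k z = mat 1"
  proof (subst matrix_eq, intro allI)
    fix v :: "real^'a"
    have "(shear k w ** shear k z) *v v = shear k w *v (shear k z *v v)"
      by (simp add: matrix_vector_mul_assoc)
    also have "\<dots> = v + (v $ k) *\<^sub>R (z + (1 + z $ k) *\<^sub>R w)"
      by (simp add: shear_mv algebra_simps)
    also have "z + (1 + z $ k) *\<^sub>R w = 0" using nz by (simp add: w_def)
    finally show "(shear k w ** shear k z) *v v = mat 1 *v v" by simp
  qed
  ultimately show ?thesis unfolding invertible_def by blast
qed

lemma image_PP: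
  assumes "linear f" "\<And>v. v \<in> B \<Longrightarrow> f v = v"
  shows "f ` PP k B c d x y = convex hull (B \<union> {f (- (c *\<^sub>R lift1 k x)), f (d *\<^sub>R lift1 k y)})"
proof -
  have fB: "f ` B = B" using assms(2) by force
  have "f ` PP k B c d x y = convex hull (f ` (B \<union> {- (c *\<^sub>R lift1 k x), d *\<^sub>R lift1 k y}))"
    unfolding PP_def by (rule convex_hull_linear_image[OF assms(1)])
  also have "f ` (B \<union> {- (c *\<^sub>R lift1 k x), d *\<^sub>R lift1 k y}) = B \<union> {f (- (c *\<^sub>R lift1 k x)), f (d *\<^sub>R lift1 k y)}"
    using fB by auto
  finally show ?thesis .
qed

lemma shear_PP:
  assumes "B \<subseteq> hplane k" "x \<in> hplane k" "y \<in> hplane k"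
  shows "(\<lambda>v. shear k z *v v) ` PP k B c d x y = PP k B c d (x + z) (y + z)"
proof -
  have "(\<lambda>v. shear k z *v v) ` PP k B c d x y =
        convex hull (B \<union> {shear k z *v (- (c *\<^sub>R lift1 k x)), shear k z *v (d *\<^sub>R lift1 k y)})"
    by (rule image_PP[OF matrix_vector_mul_linear]) (use assms(1) in \<open>auto simp: shear_mv hplane_def\<close>)
  also have "shear k z *v (- (c *\<^sub>R lift1 k x)) = - (c *\<^sub>R lift1 k (x + z))"
    using assms(2) by (simp add: shear_mv lift1_def hplane_def algebra_simps)
  also have "shear k z *v (d *\<^sub>R lift1 k y) = d *\<^sub>R lift1 k (y + z)"
    using assms(3) by (simp add: shear_mv lift1_def hplane_def algebra_simps)
  finally show ?thesis unfolding PP_def .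
qed

lemma dil_PP:
  assumes "B \<subseteq> hplane k" "y \<in> hplane k"
  shows "(\<lambda>v. shear k (axis k 1) *v v) ` PP k B c d 0 y = PP k B (2*c) (2*d) 0 ((1/2) *\<^sub>R y)"
proof -
  let ?e = "axis k 1 :: real^'a"
  have l0: "lift1 k 0 = ?e" by (simp add: lift1_def)
  have yk: "y $ k = 0" using assms(2) by (simp add: hplane_def)
  have "(\<lambda>v. shear k ?e *v v) ` PP k B c d 0 y =
        convex hull (B \<union> {shear k ?e *v (- (c *\<^sub>R lift1 k 0)), shear k ?e *v (d *\<^sub>R lift1 k y)})"
    by (rule image_PP[OF matrix_vector_mul_linear]) (use assms(1) in \<open>auto simp: shear_mv hplane_def\<close>)
  also have "shear k ?e *v (- (c *\<^sub>R lift1 k 0)) = - ((2*c) *\<^sub>R lift1 k 0)"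
  proof -
    have "shear k ?e *v (- (c *\<^sub>R ?e)) = - (c *\<^sub>R ?e) + (- c) *\<^sub>R ?e"
      by (simp only: shear_mv) simp
    also have "\<dots> = - ((2*c) *\<^sub>R ?e)"
      by (simp only: scaleR_minus_left mult_2 scaleR_left_distrib minus_add_distrib)
    finally show ?thesis unfolding l0 .
  qed
  also have "shear k ?e *v (d *\<^sub>R lift1 k y) = (2*d) *\<^sub>R lift1 k ((1/2) *\<^sub>R y)"
  proof -
    have lk: "(d *\<^sub>R lift1 k y) $ k = d" using yk by (simp add: lift1_def)
    have "shear k ?e *v (d *\<^sub>R lift1 k y) = d *\<^sub>R lift1 k y + d *\<^sub>R ?e"
      by (simp only: shear_mv lk)
    also have "\<dots> = d *\<^sub>R y + (d *\<^sub>R ?e + d *\<^sub>R ?e)"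
      by (simp only: lift1_def scaleR_add_right add.assoc)
    also have "\<dots> = (2*d) *\<^sub>R ((1/2) *\<^sub>R y) + (2*d) *\<^sub>R ?e"
      by (simp only: scaleR_scaleR mult_2 scaleR_left_distrib) simp
    also have "\<dots> = (2*d) *\<^sub>R lift1 k ((1/2) *\<^sub>R y)"
      by (simp only: lift1_def scaleR_add_right)
    finally show ?thesis .
  qed
  finally show ?thesis unfolding PP_def .
qed

lemma dil_det: "det (shear k (axis k 1)) = 2"
proof -
  have "det (shear k (axis k 1)) = prod (\<lambda>i. shear k (axis k 1) $ i $ i) UNIV"
    by (rule det_diagonal) (auto simp: shear_def axis_def)
  also have "\<dots> = prod (\<lambda>i. if i = k then 2 else 1) UNIV"
    by (rule prod.cong) (auto simp: shear_def axis_def)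
  also have "\<dots> = 2" by (simp add: prod.delta)
  finally show ?thesis .
qed



lemma star_mem:
  assumes "convex B" "0 \<in> B" "K > 0" "K *\<^sub>R u \<in> B" "0 \<le> t" "t \<le> K"
  shows "t *\<^sub>R u \<in> B"
proof -
  have "(t/K) *\<^sub>R (K *\<^sub>R u) + (1 - t/K) *\<^sub>R 0 \<in> B"
    using assms by (intro convexD) (auto simp: field_simps)
  then show ?thesis using assms(3) by simp
qed

lemma kmono:
  fixes c c' d d' :: real
  assumes "0 < c'" "c' \<le> c" "0 < d'" "d' \<le> d"
  shows "c'*d'/(c'+d') \<le> c*d/(c+d)"
proof -
  have a: "c' * d' \<le> c' * d" using mult_left_mono[of d' d c'] assms by simp
  have a2: "c' * d' * c \<le> c' * d * c" using mult_right_mono[OF a, of c] assms by simp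
  have b: "c' * d' \<le> c * d'" using mult_right_mono[of c' c d'] assms by simp
  have b2: "c' * d' * d \<le> c * d' * d" using mult_right_mono[OF b, of d] assms by simp
  have e1: "c' * d' * (c + d) = c' * d' * c + c' * d' * d" by (simp add: algebra_simps)
  have e2: "c * d * (c' + d') = c' * d * c + c * d' * d" by (simp add: algebra_simps)
  have key: "c' * d' * (c + d) \<le> c * d * (c' + d')" using a2 b2 e1 e2 by linarith
  have p1: "0 < c' + d'" "0 < c + d" using assms by auto
  show ?thesis using key p1 by (simp add: divide_simps)
qed

lemma frac_le_self:
  fixes r d :: real
  assumes "r > 0" "d > 0"
  shows "r*d/(d+r) \<le> d" "r*d/(d+r) > 0"
proof -
  have "r * d \<le> d * (d + r)" using assms by (simp add: algebra_simps)
  then show "r*d/(d+r) \<le> d" using assms by (simp add: pos_divide_le_eq)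
  show "r*d/(d+r) > 0" using assms by simp
qed

lemma dpv0:
  assumes "B \<in> Po k" "c > 0" "d > 0" "v \<in> hplane k" "(c*d/(c+d)) *\<^sub>R v \<in> B"
  shows "double_pyramid k B c d 0 v"
  by (rule dp_valid) (use assms in \<open>auto simp: hplane_def\<close>)

lemma dpvv:
  assumes "B \<in> Po k" "c > 0" "d > 0" "v \<in> hplane k"
  shows "double_pyramid k B c d v v"
  by (rule dp_valid) (use assms Po_props(2)[OF assms(1)] in auto)

lemma LOG:
  assumes "B \<in> Po k" "c > 0" "r > 0" "r *\<^sub>R t \<in> B"
  shows "- ((r*c/(c+r)) *\<^sub>R lift1 k (v - t)) \<in> lo k B c v"
proof -
  have s: "0 \<le> r/(c+r)" "r/(c+r) \<le> 1" using assms by (auto simp: field_simps)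
  have h: "1 - r/(c+r) = c/(c+r)" using assms by (simp add: field_simps)
  have "(r/(c+r)) *\<^sub>R (- (c *\<^sub>R lift1 k v)) + (1 - r/(c+r)) *\<^sub>R (r *\<^sub>R t) \<in> lo k B c v"
    unfolding lo_def by (rule hull_insert_mem[OF assms(4) s])
  moreover have "(r/(c+r)) *\<^sub>R (- (c *\<^sub>R lift1 k v)) + (1 - r/(c+r)) *\<^sub>R (r *\<^sub>R t)
      = - ((r*c/(c+r)) *\<^sub>R lift1 k (v - t))"
    unfolding h by (simp add: lift1_def algebra_simps)
  ultimately show ?thesis by simp
qed

lemma UPG:
  assumes "B \<in> Po k" "d > 0" "r > 0" "r *\<^sub>R t \<in> B"
  shows "(r*d/(d+r)) *\<^sub>R lift1 k (v + t) \<in> up k B d v"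
proof -
  have s: "0 \<le> r/(d+r)" "r/(d+r) \<le> 1" using assms by (auto simp: field_simps)
  have h: "1 - r/(d+r) = d/(d+r)" using assms by (simp add: field_simps)
  have "(r/(d+r)) *\<^sub>R (d *\<^sub>R lift1 k v) + (1 - r/(d+r)) *\<^sub>R (r *\<^sub>R t) \<in> up k B d v"
    unfolding up_def by (rule hull_insert_mem[OF assms(4) s])
  moreover have "(r/(d+r)) *\<^sub>R (d *\<^sub>R lift1 k v) + (1 - r/(d+r)) *\<^sub>R (r *\<^sub>R t)
      = (r*d/(d+r)) *\<^sub>R lift1 k (v + t)"
    unfolding h by (simp add: lift1_def algebra_simps)
  ultimately show ?thesis by simp
qed

lemma cov_apply:
  assumes "GL_covariant_on (Rn k) \<mu>" "invertible \<phi>" "P \<in> Rn k" "(\<lambda>v. \<phi> *v v) ` P \<in> Rn k"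
  shows "\<mu> ((\<lambda>v. \<phi> *v v) ` P) = \<bar>det \<phi>\<bar> *\<^sub>R (\<phi> ** \<mu> P ** transpose \<phi>)"
  using assms unfolding GL_covariant_on_def by blast

lemma Zlem:
  assumes cov: "GL_covariant_on (Rn k) \<mu>" and q0: "\<forall>P\<in>Qn k. \<mu> P = 0"
    and B: "B \<in> Po k" and cd: "c > 0" "d > 0" and z: "z \<in> hplane k"
  shows "\<mu> (PP k B c d z z) = 0"
proof -
  have z0: "(0::real^'a) \<in> hplane k" by (simp add: hplane_def)
  have dp0: "double_pyramid k B c d 0 0" by (rule dpvv[OF B cd z0])
  have m0: "\<mu> (PP k B c d 0 0) = 0" using q0 dp_Qn[OF dp0] by blast
  have img: "(\<lambda>v. shear k z *v v) ` PP k B c d 0 0 = PP k B c d z z"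
    using shear_PP[OF Po_props(4)[OF B] z0 z0, of z c d] by simp
  have inv: "invertible (shear k z)" by (rule shear_inv) (use z in \<open>simp add: hplane_def\<close>)
  have "\<mu> (PP k B c d z z) = \<bar>det (shear k z)\<bar> *\<^sub>R (shear k z ** \<mu> (PP k B c d 0 0) ** transpose (shear k z))"
    using cov_apply[OF cov inv dp_Rn[OF dp0]] img dp_Rn[OF dpvv[OF B cd z]] by simp
  then show ?thesis by (simp add: m0)
qed

lemma GR:
  assumes val: "valuation_on (Rn k) \<mu>"
    and dp1: "double_pyramid k B c d x y" and dp2: "double_pyramid k B c' d' x' y'"
    and dp3: "double_pyramid k B c d' x y'" and dp4: "double_pyramid k B c' d x' y"
    and ha: "- (c' *\<^sub>R lift1 k x') \<in> lo k B c x" and hb: "d *\<^sub>R lift1 k y \<in> up k B d' y'"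
  shows "\<mu> (PP k B c d' x y') + \<mu> (PP k B c' d x' y) = \<mu> (PP k B c d x y) + \<mu> (PP k B c' d' x' y')"
proof -
  note f1 = dp_facts[OF dp1] and f2 = dp_facts[OF dp2]
  have B: "B \<in> Po k" by (rule f1(1))
  have i1: "insert (- (c' *\<^sub>R lift1 k x')) B \<subseteq> lo k B c x"
    using ha by (auto simp: lo_def intro: hull_inc)
  have lo_sub: "lo k B c' x' \<subseteq> lo k B c x"
    unfolding lo_def[of k B c' x'] by (rule hull_minimal[OF i1]) (simp add: lo_def)
  have i2: "insert (d *\<^sub>R lift1 k y) B \<subseteq> up k B d' y'"
    using hb by (auto simp: up_def intro: hull_inc)
  have up_sub: "up k B d y \<subseteq> up k B d' y'"
    unfolding up_def[of k B d y] by (rule hull_minimal[OF i2]) (simp add: up_def)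
  have meet: "lo k B c x \<inter> up k B d' y' \<subseteq> B"
    using lo_k[OF B f1(2) f1(4)] up_k[OF B f2(3) f2(5)] by force
  have Blo: "B \<subseteq> lo k B c' x'" by (auto simp: lo_def intro: hull_inc)
  note K = dp_split[OF dp1] and L = dp_split[OF dp2] and U = dp_split[OF dp3] and I = dp_split[OF dp4]
  have un: "PP k B c d x y \<union> PP k B c' d' x' y' = PP k B c d' x y'"
    using K L U lo_sub up_sub by blast
  have int: "PP k B c d x y \<inter> PP k B c' d' x' y' = PP k B c' d x' y"
    using K L I lo_sub up_sub meet Blo by blast
  have "\<mu> (PP k B c d x y \<union> PP k B c' d' x' y') + \<mu> (PP k B c d x y \<inter> PP k B c' d' x' y')
        = \<mu> (PP k B c d x y) + \<mu> (PP k B c' d' x' y')"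
    using val dp_Rn[OF dp1] dp_Rn[OF dp2] dp_Rn[OF dp3] dp_Rn[OF dp4] un int
    unfolding valuation_on_def by metis
  then show ?thesis using un int by simp
qed

lemma I1:
  assumes val: "valuation_on (Rn k) \<mu>" and cov: "GL_covariant_on (Rn k) \<mu>" and q0: "\<forall>P\<in>Qn k. \<mu> P = 0"
    and B: "B \<in> Po k" and v: "v \<in> hplane k" and c: "c > 0" and d: "d > 0" "d \<le> d'"
    and h1: "(c*d/(c+d)) *\<^sub>R v \<in> B" and h2: "(c*d'/(c+d')) *\<^sub>R v \<in> B"
  shows "\<mu> (PP k B c d 0 v) = \<mu> (PP k B c d' 0 v)"
proof -
  have mv: "- v \<in> hplane k" using v by (simp add: hplane_def)
  obtain r where r: "r > 0" "r *\<^sub>R (- v) \<in> B" using Po_small[OF B mv] by blast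
  define c1 where "c1 = r*c/(c+r)"
  have c1: "c1 > 0" using r c by (simp add: c1_def)
  have d': "d' > 0" using d by linarith
  have ha: "- (c1 *\<^sub>R lift1 k v) \<in> lo k B c 0"
    using LOG[OF B c r, of 0] by (simp add: c1_def)
  have hb: "d *\<^sub>R lift1 k v \<in> up k B d' v"
  proof -
    have s: "0 \<le> d/d'" "d/d' \<le> 1" using d d' by (auto simp: field_simps)
    have "(d/d') *\<^sub>R (d' *\<^sub>R lift1 k v) + (1 - d/d') *\<^sub>R 0 \<in> up k B d' v"
      unfolding up_def by (rule hull_insert_mem[OF Po_props(2)[OF B] s])
    then show ?thesis using d' by simp
  qed
  have R: "\<mu> (PP k B c d' 0 v) + \<mu> (PP k B c1 d v v) = \<mu> (PP k B c d 0 v) + \<mu> (PP k B c1 d' v v)"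
    by (rule GR[OF val dpv0[OF B c d(1) v h1] dpvv[OF B c1 d' v] dpv0[OF B c d' v h2] dpvv[OF B c1 d(1) v] ha hb])
  then show ?thesis using Zlem[OF cov q0 B c1 d(1) v] Zlem[OF cov q0 B c1 d' v] by simp
qed

lemma I2:
  assumes val: "valuation_on (Rn k) \<mu>" and cov: "GL_covariant_on (Rn k) \<mu>" and q0: "\<forall>P\<in>Qn k. \<mu> P = 0"
    and B: "B \<in> Po k" and v: "v \<in> hplane k" and c: "c > 0" "c \<le> c'" and d: "d > 0"
    and h1: "(c*d/(c+d)) *\<^sub>R v \<in> B" and h2: "(c'*d/(c'+d)) *\<^sub>R v \<in> B"
  shows "\<mu> (PP k B c d 0 v) = \<mu> (PP k B c' d 0 v)"
proof -
  have mv: "- v \<in> hplane k" using v by (simp add: hplane_def)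
  have z0: "(0::real^'a) \<in> hplane k" by (simp add: hplane_def)
  obtain r where r: "r > 0" "r *\<^sub>R (- v) \<in> B" using Po_small[OF B mv] by blast
  define d0 where "d0 = r*d/(d+r)"
  have d0: "d0 > 0" using r d by (simp add: d0_def)
  have c': "c' > 0" using c by linarith
  have ha: "- (c *\<^sub>R lift1 k 0) \<in> lo k B c' 0"
  proof -
    have s: "0 \<le> c/c'" "c/c' \<le> 1" using c c' by (auto simp: field_simps)
    have "(c/c') *\<^sub>R (- (c' *\<^sub>R lift1 k 0)) + (1 - c/c') *\<^sub>R 0 \<in> lo k B c' 0"
      unfolding lo_def by (rule hull_insert_mem[OF Po_props(2)[OF B] s])
    then show ?thesis using c' by simp
  qed
  have hb: "d0 *\<^sub>R lift1 k 0 \<in> up k B d v"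
    using UPG[OF B d r, of v] by (simp add: d0_def)
  have R: "\<mu> (PP k B c' d 0 v) + \<mu> (PP k B c d0 0 0) = \<mu> (PP k B c' d0 0 0) + \<mu> (PP k B c d 0 v)"
    by (rule GR[OF val dpvv[OF B c' d0 z0] dpv0[OF B c(1) d v h1] dpv0[OF B c' d v h2] dpvv[OF B c(1) d0 z0] ha hb])
  then show ?thesis using Zlem[OF cov q0 B c(1) d0 z0] Zlem[OF cov q0 B c' d0 z0] by simp
qed



lemma antisym_entry:
  fixes M :: "real^'n^'n"
  assumes "transpose M = - M"
  shows "M $ i $ j = - (M $ j $ i)"
proof -
  have "transpose M $ j $ i = (- M) $ j $ i" using assms by simp
  then show ?thesis by (simp add: transpose_def)
qed

lemma alg:
  fixes M G :: "real^'n^'n" and k :: 'n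
  assumes aM: "transpose M = - M" and aG: "transpose G = - G" and uk: "u $ k = 0" and dl: "\<delta> \<ge> 0"
    and hM: "M = G + \<delta> *\<^sub>R (shear k u ** G ** transpose (shear k u))"
    and hG: "G = 2 *\<^sub>R (shear k (axis k 1) ** M ** transpose (shear k (axis k 1)))"
  shows "M = 0"
proof -
  have c1: "(shear k u ** G ** transpose (shear k u)) $ i $ j = G $ i $ j + u $ i * G $ k $ j + (G $ i $ k + u $ i * G $ k $ k) * u $ j" for i j
    by (simp only: shear_mult_right shear_mult_left)
  have c2: "(shear k (axis k 1) ** M ** transpose (shear k (axis k 1))) $ i $ j = M $ i $ j + axis k 1 $ i * M $ k $ j + (M $ i $ k + axis k 1 $ i * M $ k $ k) * axis k 1 $ j" for i j
    by (simp only: shear_mult_right shear_mult_left)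
  have e1: "M $ i $ j = G $ i $ j + \<delta> * (G $ i $ j + u $ i * G $ k $ j + (G $ i $ k + u $ i * G $ k $ k) * u $ j)" for i j
  proof -
    have "M $ i $ j = (G + \<delta> *\<^sub>R (shear k u ** G ** transpose (shear k u))) $ i $ j" using hM by (rule arg_cong)
    also have "\<dots> = G $ i $ j + \<delta> * ((shear k u ** G ** transpose (shear k u)) $ i $ j)"
      by (simp only: vector_add_component vector_scaleR_component real_scaleR_def)
    finally show ?thesis by (simp only: c1)
  qed
  have e2: "G $ i $ j = 2 * (M $ i $ j + axis k 1 $ i * M $ k $ j + (M $ i $ k + axis k 1 $ i * M $ k $ k) * axis k 1 $ j)" for i j
  proof -
    have "G $ i $ j = (2 *\<^sub>R (shear k (axis k 1) ** M ** transpose (shear k (axis k 1)))) $ i $ j" using hG by (rule arg_cong)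
    also have "\<dots> = 2 * ((shear k (axis k 1) ** M ** transpose (shear k (axis k 1))) $ i $ j)"
      by (simp only: vector_scaleR_component real_scaleR_def)
    finally show ?thesis by (simp only: c2)
  qed
  have Mkk: "M $ k $ k = 0" using antisym_entry[OF aM, of k k] by simp
  have Gkk: "G $ k $ k = 0" using antisym_entry[OF aG, of k k] by simp
  have colM: "M $ i $ k = 0" for i
  proof (cases "i = k")
    case True then show ?thesis using Mkk by simp
  next
    case False
    have a: "M $ i $ k = G $ i $ k + \<delta> * G $ i $ k" using e1[of i k] uk Gkk by simp
    have b: "G $ i $ k = 4 * M $ i $ k" using e2[of i k] False Mkk by (simp add: axis_def)
    have "(3 + 4 * \<delta>) * M $ i $ k = 0" using a b by (simp add: algebra_simps)
    moreover have "3 + 4 * \<delta> \<noteq> 0" using dl by linarith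
    ultimately show ?thesis by simp
  qed
  have colG: "G $ i $ k = 0" for i
    using e2[of i k] colM[of i] Mkk by (simp add: axis_def)
  have rowG: "G $ k $ j = 0" for j
    using antisym_entry[OF aG, of k j] colG[of j] by simp
  have rowM: "M $ k $ j = 0" for j
    using antisym_entry[OF aM, of k j] colM[of j] by simp
  have "M $ i $ j = 0" for i j
  proof -
    have a: "M $ i $ j = G $ i $ j + \<delta> * G $ i $ j" using e1[of i j] rowG[of j] colG[of i] Gkk by simp
    have b: "G $ i $ j = 2 * M $ i $ j" using e2[of i j] rowM[of j] colM[of i] Mkk by simp
    have "(1 + 2 * \<delta>) * M $ i $ j = 0" using a b by (simp add: algebra_simps)
    moreover have "1 + 2 * \<delta> \<noteq> 0" using dl by linarith
    ultimately show ?thesis by simp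
  qed
  then show ?thesis by (simp add: vec_eq_iff)
qed

theorem lemma3p20:
  fixes \<mu> :: "(real^'n::finite) set \<Rightarrow> real^'n^'n"
    and k :: 'n
  assumes "CARD('n) \<ge> 3"
    and "\<mu> \<in> measurable (hausdorff_borel (Rn k)) borel"
    and "valuation_on (Rn k) \<mu>"
    and "GL_covariant_on (Rn k) \<mu>"
    and "\<forall>P\<in>Qn k. \<mu> P = 0"
    and "\<forall>P\<in>Rn k. transpose (\<mu> P) = - \<mu> P"
  shows "\<forall>P\<in>Rn k. \<mu> P = 0"
proof
  note val = assms(3) and cov = assms(4) and q0 = assms(5) and anti = assms(6)
  fix P assume "P \<in> Rn k"
  then obtain B c d x y where P: "P = PP k B c d x y" and dp: "double_pyramid k B c d x y"
    unfolding Rn_def PP_def by blast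
  note f = dp_facts[OF dp]
  have B: "B \<in> Po k" and c: "c > 0" and d: "d > 0" and x: "x \<in> hplane k" and y: "y \<in> hplane k"
    using f by auto
  have z0: "(0::real^'n) \<in> hplane k" by (simp add: hplane_def)
  have cB: "convex B" and B0: "0 \<in> B" using Po_props[OF B] by auto
  define u where "u = (1/2) *\<^sub>R (y - x)"
  have yx: "y - x = u + u" unfolding u_def by (simp add: scaleR_add_left[symmetric])
  have u: "u \<in> hplane k" using x y by (simp add: u_def hplane_def)
  have mu: "- u \<in> hplane k" using u by (simp add: hplane_def)
  have uu: "u + u \<in> hplane k" using u by (simp add: hplane_def)
  have p0: "(c*d/(c+d)) *\<^sub>R (y - x) \<in> B" by (rule dp_point[OF dp])
  define K where "K = 2 * (c*d/(c+d))"
  have K: "K > 0" using c d by (simp add: K_def)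
  have Keq: "K *\<^sub>R u = (c*d/(c+d)) *\<^sub>R (u + u)"
    by (simp only: K_def scaleR_add_right mult_2 scaleR_left_distrib)
  have Ku: "K *\<^sub>R u \<in> B" using p0 unfolding yx Keq .
  have K2: "(2*c)*(2*d)/((2*c)+(2*d)) = K" unfolding K_def using c d by (simp add: field_simps)
  have val_u: "(c'*d'/(c'+d')) *\<^sub>R u \<in> B" if "0 < c'" "c' \<le> 2*c" "0 < d'" "d' \<le> 2*d" for c' d'
  proof -
    have h1: "c'*d'/(c'+d') \<le> K" using kmono[OF that] K2 by simp
    have h2: "0 \<le> c'*d'/(c'+d')" using that by simp
    show ?thesis by (rule star_mem[OF cB B0 K Ku h2 h1])
  qed
  \<comment> \<open>reduction to x = 0\<close>
  have dp1: "double_pyramid k B c d 0 (u + u)"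
    by (rule dpv0[OF B c d uu]) (use p0 yx in simp)
  have imgx: "(\<lambda>v. shear k x *v v) ` PP k B c d 0 (u + u) = P"
    using shear_PP[OF Po_props(4)[OF B] z0 uu, of x c d] unfolding P yx[symmetric] by simp
  have invx: "invertible (shear k x)" by (rule shear_inv) (use x in \<open>simp add: hplane_def\<close>)
  obtain r where r: "r > 0" "r *\<^sub>R (- u) \<in> B" using Po_small[OF B mu] by blast
  define c1 where "c1 = r*c/(c+r)"
  define d1 where "d1 = r*d/(d+r)"
  have c1: "c1 > 0" "c1 \<le> c" using frac_le_self[OF r(1) c] by (simp_all add: c1_def add.commute)
  have d1: "d1 > 0" "d1 \<le> d" using frac_le_self[OF r(1) d] by (simp_all add: d1_def)
  have c1': "c1 \<le> 2*c" using c1 c by linarith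
  have d1': "d1 \<le> 2*d" using d1 d by linarith
  have c2: "c \<le> 2*c" using c by linarith
  have d2: "d \<le> 2*d" using d by linarith
  have cc: "0 < 2*c" using c by linarith
  have dd: "0 < 2*d" using d by linarith
  have ha: "- (c1 *\<^sub>R lift1 k u) \<in> lo k B c 0"
    using LOG[OF B c r, of 0] by (simp add: c1_def)
  have hb: "d1 *\<^sub>R lift1 k u \<in> up k B d (u + u)"
  proof -
    have "(r*d/(d+r)) *\<^sub>R lift1 k ((u + u) + - u) \<in> up k B d (u + u)" by (rule UPG[OF B d r])
    moreover have "(u + u) + - u = u" by simp
    ultimately show ?thesis by (simp add: d1_def)
  qed
  have dpA: "double_pyramid k B c d1 0 u" by (rule dpv0[OF B c d1(1) u val_u[OF c c2 d1(1) d1']])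
  have dpB: "double_pyramid k B c1 d u (u + u)"
    by (rule dp_valid[OF B c1(1) d u uu]) (use val_u[OF c1(1) c1' d d2] in simp)
  have dpC: "double_pyramid k B c1 d1 u u" by (rule dpvv[OF B c1(1) d1(1) u])
  have R: "\<mu> (PP k B c d 0 (u + u)) + \<mu> (PP k B c1 d1 u u) = \<mu> (PP k B c d1 0 u) + \<mu> (PP k B c1 d u (u + u))"
    by (rule GR[OF val dpA dpB dp1 dpC ha hb])
  have Z1: "\<mu> (PP k B c1 d1 u u) = 0" by (rule Zlem[OF cov q0 B c1(1) d1(1) u])
  define G where "G = \<mu> (PP k B (2*c) (2*d) 0 u)"
  have G1: "\<mu> (PP k B c d1 0 u) = G"
  proof -
    have "\<mu> (PP k B c d1 0 u) = \<mu> (PP k B c (2*d) 0 u)"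
      by (rule I1[OF val cov q0 B u c d1(1) d1' val_u[OF c c2 d1(1) d1'] val_u[OF c c2 dd order.refl]])
    also have "\<dots> = G" unfolding G_def
      by (rule I2[OF val cov q0 B u c c2 dd val_u[OF c c2 dd order.refl] val_u[OF cc order.refl dd order.refl]])
    finally show ?thesis .
  qed
  have G2: "\<mu> (PP k B c1 d 0 u) = G"
  proof -
    have "\<mu> (PP k B c1 d 0 u) = \<mu> (PP k B c1 (2*d) 0 u)"
      by (rule I1[OF val cov q0 B u c1(1) d d2 val_u[OF c1(1) c1' d d2] val_u[OF c1(1) c1' dd order.refl]])
    also have "\<dots> = G" unfolding G_def
      by (rule I2[OF val cov q0 B u c1(1) c1' dd val_u[OF c1(1) c1' dd order.refl] val_u[OF cc order.refl dd order.refl]])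
    finally show ?thesis .
  qed
  have dpD: "double_pyramid k B c1 d 0 u" by (rule dpv0[OF B c1(1) d u val_u[OF c1(1) c1' d d2]])
  have imgu: "(\<lambda>v. shear k u *v v) ` PP k B c1 d 0 u = PP k B c1 d u (u + u)"
    using shear_PP[OF Po_props(4)[OF B] z0 u, of u c1 d] by simp
  have invu: "invertible (shear k u)" by (rule shear_inv) (use u in \<open>simp add: hplane_def\<close>)
  have S1: "\<mu> (PP k B c1 d u (u + u)) = \<bar>det (shear k u)\<bar> *\<^sub>R (shear k u ** G ** transpose (shear k u))"
    using cov_apply[OF cov invu dp_Rn[OF dpD]] imgu dp_Rn[OF dpB] G2 by simp
  define M where "M = \<mu> (PP k B c d 0 (u + u))"
  have dpG: "double_pyramid k B (2*c) (2*d) 0 u" by (rule dpv0[OF B cc dd u val_u[OF cc order.refl dd order.refl]])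
  have imgd: "(\<lambda>v. shear k (axis k 1) *v v) ` PP k B c d 0 (u + u) = PP k B (2*c) (2*d) 0 u"
  proof -
    have "(1/2) *\<^sub>R (u + u) = u" by (simp add: scaleR_add_left[symmetric])
    then show ?thesis using dil_PP[OF Po_props(4)[OF B] uu, of c d] by simp
  qed
  have invd: "invertible (shear k (axis k 1))" by (rule shear_inv) simp
  have hG: "G = 2 *\<^sub>R (shear k (axis k 1) ** M ** transpose (shear k (axis k 1)))"
    using cov_apply[OF cov invd dp_Rn[OF dp1]] imgd dp_Rn[OF dpG]
    unfolding G_def M_def by (simp add: dil_det)
  have hM: "M = G + \<bar>det (shear k u)\<bar> *\<^sub>R (shear k u ** G ** transpose (shear k u))"
    using R Z1 G1 S1 unfolding M_def by simp
  have aM: "transpose M = - M" unfolding M_def using anti dp_Rn[OF dp1] by blast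
  have aG: "transpose G = - G" unfolding G_def using anti dp_Rn[OF dpG] by blast
  have uk: "u $ k = 0" using u by (simp add: hplane_def)
  have M0: "M = 0" by (rule alg[OF aM aG uk abs_ge_zero hM hG])
  have "\<mu> P = \<bar>det (shear k x)\<bar> *\<^sub>R (shear k x ** M ** transpose (shear k x))"
    using cov_apply[OF cov invx dp_Rn[OF dp1]] imgx \<open>P \<in> Rn k\<close> unfolding M_def by simp
  then show "\<mu> P = 0" using M0 by simp
qed

end
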